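(* Let $G$ be a locally compact, non-compact, Hausdorff topological group. Then $G^*=G^{\mathcal{LUC}}\setminus\varepsilon(G)$ is a left ideal of $G^{\mathcal{LUC}}$ if and only if $G$ is topologically weak left cancellative.
   Context: For a topological group (or semitopological semigroup) $G$: $\mathcal{CB}(G)$ is the C*-algebra of bounded continuous complex functions with sup norm, $L_sf(x)=f(sx)$. $\mathcal{LUC}(G)$ is the C*-algebra of $f\in\mathcal{CB}(G)$ such that $s\mapsto L_sf$ is norm continuous from $G$ to $\mathcal{CB}(G)$; for locally compact Hausdorff groups it coincides with $Lmc(G)=\{f\in\mathcal{CB}(G):T_\mu f\in\mathcal{CB}(G)\ \forall\mu\in\beta G\}$, where $\beta G$ is the spectrum of $\mathcal{CB}(G)$ and $(T_\mu f)(s)=\mu(L_sf)$. $G^{\mathcal{LUC}}$ is the spectrum of $\mathcal{LUC}(G)$ with the Gelfand topology and multiplication $\mu\nu=\mu\circ T_\nu$, where $(T_\nu f)(s)=\nu(L_sf)$; $\varepsilon:G\to G^{\mathcal{LUC}}$ is evaluation. A left ideal is a nonempty $L$ with $\mu L\subseteq L$ for all $\mu\in G^{\mathcal{LUC}}$. Zero sets: $Z(Lmc(G))=\{f^{-1}(0):f\in Lmc(G)\}$; $E_\epsilon(f)=\{x:|f(x)|\le\epsilon\}$; $e(u)=\{E_\epsilon(f):f\in Lmc(G),f(u)=0,\epsilon>0\}$. $G$ is topologically weak left cancellative if for every $u\in G$ there exists a compact $A\in Z(Lmc(G))$ with $A\in e(u)$ such that $\{t\in G:vt\in A\}$ is compact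 for every $v\in G$. *)

theory Defs
  imports "HOL-Analysis.Analysis"
begin

definition topological_group :: "('a::topological_space \<Rightarrow> 'a \<Rightarrow> 'a) \<Rightarrow> 'a \<Rightarrow> ('a \<Rightarrow> 'a) \<Rightarrow> bool" where
  "topological_group gm ge gi \<longleftrightarrow>
     group gm ge gi \<and>
     continuous_on UNIV (\<lambda>p. gm (fst p) (snd p)) \<and>
     continuous_on UNIV gi"

definition CB :: "('a::topological_space \<Rightarrow> complex) set" where
  "CB = {f. continuous_on UNIV f \<and> bounded (range f)}"

definition Ltr :: "('a \<Rightarrow> 'a \<Rightarrow> 'a) \<Rightarrow> 'a \<Rightarrow> ('a \<Rightarrow> complex) \<Rightarrow> ('a \<Rightarrow> complex)" where
  "Ltr gm s f = (\<lambda>x. f (gm s x))"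

text \<open>LUC(G): f in CB(G) with s \<mapsto> L_s f norm continuous (sup norm), written out:
  for every s and every e > 0 there is a neighbourhood U of s with
  sup_x |f(tx) - f(sx)| \<le> e for all t in U.\<close>
definition LUC :: "('a::topological_space \<Rightarrow> 'a \<Rightarrow> 'a) \<Rightarrow> ('a \<Rightarrow> complex) set" where
  "LUC gm = {f \<in> CB. \<forall>s. \<forall>e>0. \<exists>U. open U \<and> s \<in> U \<and>
       (\<forall>t\<in>U. \<forall>x. cmod (Ltr gm t f x - Ltr gm s f x) \<le> e)}"

text \<open>Functionals are represented extensionally
  (value 0 outside A) so that equality of characters is equality on A.\<close>
definition characters :: "('a \<Rightarrow> complex) set \<Rightarrow> (('a \<Rightarrow> complex) \<Rightarrow> complex) set" where
  "characters A = {\<phi>.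
      (\<forall>f. f \<notin> A \<longrightarrow> \<phi> f = 0) \<and>
      (\<forall>f\<in>A. \<forall>g\<in>A. \<phi> (\<lambda>x. f x + g x) = \<phi> f + \<phi> g) \<and>
      (\<forall>f\<in>A. \<forall>c. \<phi> (\<lambda>x. c * f x) = c * \<phi> f) \<and>
      (\<forall>f\<in>A. \<forall>g\<in>A. \<phi> (\<lambda>x. f x * g x) = \<phi> f * \<phi> g) \<and>
      (\<exists>f\<in>A. \<phi> f \<noteq> 0)}"

definition betaG :: "(('a::topological_space \<Rightarrow> complex) \<Rightarrow> complex) set" where
  "betaG = characters CB"

definition GLUC :: "('a::topological_space \<Rightarrow> 'a \<Rightarrow> 'a) \<Rightarrow> (('a \<Rightarrow> complex) \<Rightarrow> complex) set" where
  "GLUC gm = characters (LUC gm)"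

definition Top :: "('a \<Rightarrow> 'a \<Rightarrow> 'a) \<Rightarrow> (('a \<Rightarrow> complex) \<Rightarrow> complex) \<Rightarrow> ('a \<Rightarrow> complex) \<Rightarrow> ('a \<Rightarrow> complex)" where
  "Top gm \<nu> f = (\<lambda>s. \<nu> (Ltr gm s f))"

definition luc_mult :: "('a::topological_space \<Rightarrow> 'a \<Rightarrow> 'a) \<Rightarrow> (('a \<Rightarrow> complex) \<Rightarrow> complex)
     \<Rightarrow> (('a \<Rightarrow> complex) \<Rightarrow> complex) \<Rightarrow> (('a \<Rightarrow> complex) \<Rightarrow> complex)" where
  "luc_mult gm \<mu> \<nu> = (\<lambda>f. if f \<in> LUC gm then \<mu> (Top gm \<nu> f) else 0)"

definition evalmap :: "('a::topological_space \<Rightarrow> 'a \<Rightarrow> 'a) \<Rightarrow> 'a \<Rightarrow> (('a \<Rightarrow> complex) \<Rightarrow> complex)" where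
  "evalmap gm x = (\<lambda>f. if f \<in> LUC gm then f x else 0)"

definition left_ideal :: "('a::topological_space \<Rightarrow> 'a \<Rightarrow> 'a) \<Rightarrow> (('a \<Rightarrow> complex) \<Rightarrow> complex) set \<Rightarrow> bool" where
  "left_ideal gm L \<longleftrightarrow> L \<noteq> {} \<and> L \<subseteq> GLUC gm \<and>
     (\<forall>\<mu>\<in>GLUC gm. \<forall>\<nu>\<in>L. luc_mult gm \<mu> \<nu> \<in> L)"

definition Lmc :: "('a::topological_space \<Rightarrow> 'a \<Rightarrow> 'a) \<Rightarrow> ('a \<Rightarrow> complex) set" where
  "Lmc gm = {f \<in> CB. \<forall>\<mu>\<in>betaG. Top gm \<mu> f \<in> CB}"

definition Zsets :: "('a::topological_space \<Rightarrow> 'a \<Rightarrow> 'a) \<Rightarrow> 'a set set" where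
  "Zsets gm = {f -` {0} | f. f \<in> Lmc gm}"

definition Eset :: "real \<Rightarrow> ('a \<Rightarrow> complex) \<Rightarrow> 'a set" where
  "Eset e f = {x. cmod (f x) \<le> e}"

definition esets :: "('a::topological_space \<Rightarrow> 'a \<Rightarrow> 'a) \<Rightarrow> 'a \<Rightarrow> 'a set set" where
  "esets gm u = {Eset e f | e f. f \<in> Lmc gm \<and> f u = 0 \<and> e > 0}"

definition top_weak_left_cancellative :: "('a::topological_space \<Rightarrow> 'a \<Rightarrow> 'a) \<Rightarrow> bool" where
  "top_weak_left_cancellative gm \<longleftrightarrow>
     (\<forall>u. \<exists>A. compact A \<and> A \<in> Zsets gm \<and> A \<in> esets gm u \<and>
            (\<forall>v. compact {t. gm v t \<in> A}))"

end

theory Submission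
  imports Defs
begin

lemma tg_group: "topological_group gm ge gi \<Longrightarrow> group gm ge gi"
  by (simp add: topological_group_def)

lemma tg_cont_left:
  assumes "topological_group gm ge gi" shows "continuous_on UNIV (gm a)"
proof -
  have c: "continuous_on UNIV (\<lambda>p. gm (fst p) (snd p))" using assms by (simp add: topological_group_def)
  have "continuous_on UNIV (\<lambda>x. (a, x))" by (intro continuous_intros)
  from continuous_on_compose2[OF c this] show ?thesis by simp
qed

lemma tg_cont_right:
  assumes "topological_group gm ge gi" shows "continuous_on UNIV (\<lambda>x. gm x a)"
proof -
  have c: "continuous_on UNIV (\<lambda>p. gm (fst p) (snd p))" using assms by (simp add: topological_group_def)
  have "continuous_on UNIV (\<lambda>x. (x, a))" by (intro continuous_intros)
  from continuous_on_compose2[OF c this] show ?thesis by simp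
qed

lemma tg_cont_inv: "topological_group gm ge gi \<Longrightarrow> continuous_on UNIV gi"
  by (simp add: topological_group_def)

lemma tg_cont2: "topological_group gm ge gi \<Longrightarrow> continuous_on UNIV (\<lambda>p. gm (fst p) (snd p))"
  by (simp add: topological_group_def)

lemma open_vimage_UNIV: "continuous_on UNIV f \<Longrightarrow> open S \<Longrightarrow> open (f -` S)"
  using continuous_on_open_vimage[of UNIV f] by simp

lemma cont_from_eps:
  fixes h :: "'a::topological_space \<Rightarrow> complex"
  assumes "\<And>s e. e > 0 \<Longrightarrow> \<exists>U. open U \<and> s \<in> U \<and> (\<forall>t\<in>U. cmod (h t - h s) \<le> e)"
  shows "continuous_on UNIV h"
  unfolding continuous_on_def
proof (intro ballI)
  fix s :: 'a
  show "(h \<longlongrightarrow> h s) (at s within UNIV)"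
  proof (rule tendstoI)
    fix e :: real assume "e > 0"
    then obtain U where U: "open U" "s \<in> U" "\<forall>t\<in>U. cmod (h t - h s) \<le> e/2"
      using assms[of "e/2" s] by auto
    show "\<forall>\<^sub>F t in at s within UNIV. dist (h t) (h s) < e"
      unfolding eventually_at_topological using U \<open>e>0\<close>
      by (intro exI[of _ U]) (auto simp: dist_norm)
  qed
qed

lemma LUC_D: "f \<in> LUC gm \<Longrightarrow> e > 0 \<Longrightarrow> \<exists>U. open U \<and> s \<in> U \<and> (\<forall>t\<in>U. \<forall>x. cmod (f (gm t x) - f (gm s x)) \<le> e)"
  unfolding LUC_def Ltr_def by auto

lemma LUC_I: "f \<in> CB \<Longrightarrow> (\<And>s e. e > 0 \<Longrightarrow> \<exists>U. open U \<and> s \<in> U \<and> (\<forall>t\<in>U. \<forall>x. cmod (f (gm t x) - f (gm s x)) \<le> e)) \<Longrightarrow> f \<in> LUC gm"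
  unfolding LUC_def Ltr_def by auto

lemma const_outside_LUC:
  fixes f :: "'a::t2_space \<Rightarrow> complex"
  assumes tg: "topological_group gm ge gi" and lc: "locally_compact_space (euclidean :: 'a topology)"
    and fc: "continuous_on UNIV f" and K: "compact K" and fo: "\<forall>x. x\<notin>K \<longrightarrow> f x = c"
  shows "f \<in> LUC gm"
proof (rule LUC_I)
  have "range f \<subseteq> f ` K \<union> {c}" using fo by auto
  moreover have "bounded (f ` K \<union> {c})"
    using compact_continuous_image[OF continuous_on_subset[OF fc] K] compact_imp_bounded by auto
  ultimately have "bounded (range f)" by (rule bounded_subset[rotated])
  then show "f \<in> CB" unfolding CB_def using fc by auto
next
  fix s :: 'a and e :: real assume e: "e > 0"
  interpret G: group gm ge gi using tg tg_group by auto
  obtain V N where VN: "open V" "compact N" "s \<in> V" "V \<subseteq> N"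
    using lc unfolding locally_compact_space_def by (auto; meson)
  define C where "C = (\<lambda>p. gm (gi (fst p)) (snd p)) ` (N \<times> K)"
  have c2: "continuous_on UNIV (\<lambda>p. gm (fst p) (snd p))" using tg by (rule tg_cont2)
  have ci: "continuous_on UNIV gi" using tg by (rule tg_cont_inv)
  have "continuous_on UNIV (\<lambda>p. gm (gi (fst p)) (snd p))"
  proof -
    have "continuous_on UNIV (\<lambda>p. (gi (fst p), snd p))"
      by (intro continuous_intros continuous_on_compose2[OF ci]) auto
    from continuous_on_compose2[OF c2 this] show ?thesis by simp
  qed
  then have cC: "compact C" unfolding C_def
    by (intro compact_continuous_image compact_Times VN K) (auto intro: continuous_on_subset)
  define W where "W = (\<lambda>p. f (gm (fst p) (snd p)) - f (gm s (snd p))) -` {z. cmod z < e}"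
  have "continuous_on UNIV (\<lambda>p. f (gm (fst p) (snd p)))"
    using continuous_on_compose2[OF fc c2] by simp
  moreover have "continuous_on UNIV (\<lambda>p::'a\<times>'a. f (gm s (snd p)))"
    using continuous_on_compose2[OF fc continuous_on_compose2[OF tg_cont_left[OF tg] continuous_on_snd[OF continuous_on_id]]]
    by simp
  ultimately have "continuous_on UNIV (\<lambda>p. f (gm (fst p) (snd p)) - f (gm s (snd p)))"
    by (intro continuous_intros)
  then have oW: "open W" unfolding W_def
    by (rule open_vimage_UNIV) (intro open_Collect_less continuous_intros)
  have "{s} \<times> C \<subseteq> W" using e by (auto simp: W_def)
  then obtain X0 where X0: "s \<in> X0" "open X0" "X0 \<times> C \<subseteq> W"
    using Elementary_Topology.tube_lemma[OF cC oW, of s] by blast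
  show "\<exists>U. open U \<and> s \<in> U \<and> (\<forall>t\<in>U. \<forall>x. cmod (f (gm t x) - f (gm s x)) \<le> e)"
  proof (intro exI[of _ "X0 \<inter> V"] conjI ballI allI)
    show "open (X0 \<inter> V)" using X0 VN by auto
    show "s \<in> X0 \<inter> V" using X0 VN by auto
    fix t x assume t: "t \<in> X0 \<inter> V"
    show "cmod (f (gm t x) - f (gm s x)) \<le> e"
    proof (cases "x \<in> C")
      case True
      then have "(t, x) \<in> W" using X0 t by auto
      then show ?thesis by (auto simp: W_def)
    next
      case False
      have inC: "gm r x \<notin> K" if "r \<in> N" for r
      proof
        assume "gm r x \<in> K"
        then have "gm (gi r) (gm r x) \<in> C" unfolding C_def using that by (intro image_eqI[of _ _ "(r, gm r x)"]) auto
        moreover have "gm (gi r) (gm r x) = x"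
          by (simp add: G.assoc[symmetric] G.group_left_neutral)
        ultimately show False using False by simp
      qed
      have "t \<in> N" "s \<in> N" using t VN by auto
      then show ?thesis using inC fo e by auto
    qed
  qed
qed

lemma char_out: "\<phi> \<in> characters A \<Longrightarrow> f \<notin> A \<Longrightarrow> \<phi> f = 0"
  unfolding characters_def by auto
lemma char_add: "\<phi> \<in> characters A \<Longrightarrow> f \<in> A \<Longrightarrow> g \<in> A \<Longrightarrow> \<phi> (\<lambda>x. f x + g x) = \<phi> f + \<phi> g"
  unfolding characters_def by auto
lemma char_scal: "\<phi> \<in> characters A \<Longrightarrow> f \<in> A \<Longrightarrow> \<phi> (\<lambda>x. c * f x) = c * \<phi> f"
  unfolding characters_def by auto
lemma char_mult: "\<phi> \<in> characters A \<Longrightarrow> f \<in> A \<Longrightarrow> g \<in> A \<Longrightarrow> \<phi> (\<lambda>x. f x * g x) = \<phi> f * \<phi> g"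
  unfolding characters_def by auto
lemma char_nz: "\<phi> \<in> characters A \<Longrightarrow> \<exists>f\<in>A. \<phi> f \<noteq> 0"
  unfolding characters_def by auto

lemma char_one:
  assumes "\<phi> \<in> characters A" "(\<lambda>x. 1) \<in> A" shows "\<phi> (\<lambda>x. 1) = 1"
proof -
  obtain f where f: "f \<in> A" "\<phi> f \<noteq> 0" using char_nz[OF assms(1)] by auto
  have "\<phi> (\<lambda>x. f x * 1) = \<phi> f * \<phi> (\<lambda>x. 1)" by (rule char_mult[OF assms(1) f(1) assms(2)])
  then have "\<phi> f = \<phi> f * \<phi> (\<lambda>x. 1)" by simp
  then show ?thesis using f(2) by simp
qed

lemma char_const:
  assumes "\<phi> \<in> characters A" "(\<lambda>x. 1) \<in> A" shows "\<phi> (\<lambda>x. c) = c"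
proof -
  have "\<phi> (\<lambda>x. c * 1) = c * \<phi> (\<lambda>x. 1)" by (rule char_scal[OF assms(1) assms(2)])
  then show ?thesis using char_one[OF assms] by simp
qed

lemma char_bound:
  assumes phi: "\<phi> \<in> characters A"
    and const: "\<And>c. (\<lambda>x. c) \<in> A"
    and add: "\<And>f g. f \<in> A \<Longrightarrow> g \<in> A \<Longrightarrow> (\<lambda>x. f x + g x) \<in> A"
    and inv: "\<And>h B c. h \<in> A \<Longrightarrow> (\<forall>x. cmod (h x) \<le> B) \<Longrightarrow> B < cmod c \<Longrightarrow> (\<lambda>x. 1 / (h x - c)) \<in> A"
    and h: "h \<in> A" "\<forall>x. cmod (h x) \<le> B"
  shows "cmod (\<phi> h) \<le> B"
proof (rule ccontr)
  assume "\<not> cmod (\<phi> h) \<le> B"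
  then have Bc: "B < cmod (\<phi> h)" by simp
  define c where "c = \<phi> h"
  have kA: "(\<lambda>x. 1 / (h x - c)) \<in> A" using inv[OF h] Bc c_def by simp
  have hA: "(\<lambda>x. h x + (- c)) \<in> A" using add[OF h(1) const] .
  have "\<phi> (\<lambda>x. h x + (- c)) = \<phi> h + \<phi> (\<lambda>x. - c)" using char_add[OF phi h(1) const] .
  also have "\<phi> (\<lambda>x. - c) = - c" using char_const[OF phi const] .
  finally have z: "\<phi> (\<lambda>x. h x + (- c)) = 0" using c_def by simp
  have ne: "h x - c \<noteq> 0" for x
  proof
    assume "h x - c = 0" then have "cmod (h x) = cmod c" by simp
    then show False using h(2) Bc c_def by (metis not_le)
  qed
  have "(\<lambda>x. (h x + (- c)) * (1 / (h x - c))) = (\<lambda>x. 1)"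
    using ne by (auto simp: field_simps)
  then have "\<phi> (\<lambda>x. 1) = \<phi> (\<lambda>x. h x + (- c)) * \<phi> (\<lambda>x. 1 / (h x - c))"
    using char_mult[OF phi hA kA] by simp
  then have "\<phi> (\<lambda>x. 1) = 0" using z by simp
  then show False using char_one[OF phi const] by simp
qed

lemma CB_D: "f \<in> CB \<Longrightarrow> \<exists>B. \<forall>x. cmod (f x) \<le> B"
  unfolding CB_def bounded_iff by auto

lemma CB_const: "(\<lambda>x. c) \<in> CB"
  unfolding CB_def by (auto intro: continuous_intros)

lemma CB_add: "f \<in> CB \<Longrightarrow> g \<in> CB \<Longrightarrow> (\<lambda>x. f x + g x) \<in> CB"
proof -
  assume f: "f \<in> CB" and g: "g \<in> CB"
  obtain B1 B2 where "\<forall>x. cmod (f x) \<le> B1" "\<forall>x. cmod (g x) \<le> B2" using CB_D f g by metis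
  then have "\<forall>x. cmod (f x + g x) \<le> B1 + B2" by (metis add_mono norm_triangle_le)
  then show ?thesis using f g unfolding CB_def bounded_iff by (auto intro: continuous_intros)
qed

lemma inv_bound:
  fixes a c :: complex
  assumes "cmod a \<le> B" "B < cmod c"
  shows "a - c \<noteq> 0" "cmod c - B \<le> cmod (a - c)"
proof -
  have "cmod c - cmod a \<le> cmod (a - c)" by (metis norm_minus_commute norm_triangle_ineq2)
  then show "cmod c - B \<le> cmod (a - c)" using assms by linarith
  then show "a - c \<noteq> 0" using assms by auto
qed

lemma CB_inv:
  assumes h: "h \<in> CB" "\<forall>x. cmod (h x) \<le> B" and Bc: "B < cmod c"
  shows "(\<lambda>x. 1 / (h x - c)) \<in> CB"
proof -
  have ne: "\<forall>x. h x - c \<noteq> 0" using inv_bound(1) h(2) Bc by blast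
  have cont: "continuous_on UNIV (\<lambda>x. 1 / (h x - c))"
    using h(1) ne unfolding CB_def by (auto intro!: continuous_intros)
  have "cmod (1 / (h x - c)) \<le> 1 / (cmod c - B)" for x
  proof -
    have "cmod c - B \<le> cmod (h x - c)" using inv_bound(2) h(2) Bc by blast
    then show ?thesis using Bc by (simp add: norm_divide frac_le)
  qed
  then show ?thesis using cont unfolding CB_def bounded_iff by auto
qed

lemma char_bound_CB:
  "\<phi> \<in> characters CB \<Longrightarrow> h \<in> CB \<Longrightarrow> \<forall>x. cmod (h x) \<le> B \<Longrightarrow> cmod (\<phi> h) \<le> B"
  by (rule char_bound[where A=CB]) (auto intro: CB_const CB_add CB_inv)

lemma LUC_CB: "f \<in> LUC gm \<Longrightarrow> f \<in> CB" unfolding LUC_def by auto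

lemma LUC_const: "(\<lambda>x. c) \<in> LUC gm"
  by (rule LUC_I[OF CB_const]) (auto intro: exI[of _ UNIV])

lemma LUC_add:
  assumes f: "f \<in> LUC gm" and g: "g \<in> LUC gm" shows "(\<lambda>x. f x + g x) \<in> LUC gm"
proof (rule LUC_I)
  show "(\<lambda>x. f x + g x) \<in> CB" using CB_add LUC_CB f g by blast
  fix s and e :: real assume e: "e > 0"
  obtain U1 where U1: "open U1" "s \<in> U1" "\<forall>t\<in>U1. \<forall>x. cmod (f (gm t x) - f (gm s x)) \<le> e/2"
    using LUC_D[OF f, of "e/2" s] e by auto
  obtain U2 where U2: "open U2" "s \<in> U2" "\<forall>t\<in>U2. \<forall>x. cmod (g (gm t x) - g (gm s x)) \<le> e/2"
    using LUC_D[OF g, of "e/2" s] e by auto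
  have "cmod (f (gm t x) + g (gm t x) - (f (gm s x) + g (gm s x))) \<le> e" if "t \<in> U1 \<inter> U2" for t x
  proof -
    have "cmod (f (gm t x) + g (gm t x) - (f (gm s x) + g (gm s x)))
       \<le> cmod (f (gm t x) - f (gm s x)) + cmod (g (gm t x) - g (gm s x))"
      by (metis add_diff_add norm_triangle_ineq)
    moreover have "cmod (f (gm t x) - f (gm s x)) \<le> e/2" "cmod (g (gm t x) - g (gm s x)) \<le> e/2"
      using U1(3) U2(3) that by auto
    ultimately show ?thesis by linarith
  qed
  then show "\<exists>U. open U \<and> s \<in> U \<and> (\<forall>t\<in>U. \<forall>x. cmod (f (gm t x) + g (gm t x) - (f (gm s x) + g (gm s x))) \<le> e)"
    using U1 U2 by (intro exI[of _ "U1 \<inter> U2"]) auto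
qed

lemma CB_scal: "f \<in> CB \<Longrightarrow> (\<lambda>x. c * f x) \<in> CB"
proof -
  assume f: "f \<in> CB"
  obtain B where "\<forall>x. cmod (f x) \<le> B" using CB_D f by metis
  then have "\<forall>x. cmod (c * f x) \<le> cmod c * B" by (simp add: norm_mult mult_left_mono)
  then show ?thesis using f unfolding CB_def bounded_iff by (auto intro: continuous_intros)
qed

lemma LUC_scal:
  assumes f: "f \<in> LUC gm" shows "(\<lambda>x. c * f x) \<in> LUC gm"
proof (rule LUC_I)
  show "(\<lambda>x. c * f x) \<in> CB" using CB_scal LUC_CB f by blast
  fix s and e :: real assume e: "e > 0"
  obtain U where U: "open U" "s \<in> U" "\<forall>t\<in>U. \<forall>x. cmod (f (gm t x) - f (gm s x)) \<le> e / (cmod c + 1)"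
  proof -
    have "0 < e / (cmod c + 1)" using e by (intro divide_pos_pos) (auto intro: add_nonneg_pos)
    then show ?thesis using LUC_D[OF f, of "e/(cmod c + 1)" s] that by blast
  qed
  have "cmod (c * f (gm t x) - c * f (gm s x)) \<le> e" if "t \<in> U" for t x
  proof -
    have "cmod (c * f (gm t x) - c * f (gm s x)) = cmod c * cmod (f (gm t x) - f (gm s x))"
      by (metis norm_mult right_diff_distrib)
    also have "\<dots> \<le> cmod c * (e / (cmod c + 1))" using U(3) that by (intro mult_left_mono) auto
    also have "\<dots> \<le> e" proof - have p: "0 < cmod c + 1" by (simp add: add_nonneg_pos) have "cmod c * e \<le> e * (cmod c + 1)" using e by (simp add: algebra_simps) then show ?thesis using p by (simp add: divide_le_eq mult.commute) qed
    finally show ?thesis .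
  qed
  then show "\<exists>U. open U \<and> s \<in> U \<and> (\<forall>t\<in>U. \<forall>x. cmod (c * f (gm t x) - c * f (gm s x)) \<le> e)"
    using U by blast
qed

lemma LUC_mult:
  assumes f: "f \<in> LUC gm" and g: "g \<in> LUC gm" shows "(\<lambda>x. f x * g x) \<in> LUC gm"
proof (rule LUC_I)
  obtain Bf Bg where B: "\<forall>x. cmod (f x) \<le> Bf" "\<forall>x. cmod (g x) \<le> Bg"
    using CB_D LUC_CB f g by metis
  have Bnn: "0 \<le> Bf" "0 \<le> Bg" using B norm_ge_zero order_trans by blast+
  have "\<forall>x. cmod (f x * g x) \<le> Bf * Bg" using B Bnn by (simp add: norm_mult mult_mono)
  then show "(\<lambda>x. f x * g x) \<in> CB"
    using LUC_CB f g unfolding CB_def bounded_iff by (auto intro: continuous_intros)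
  fix s and e :: real assume e: "e > 0"
  define M where "M = Bf + Bg + 1"
  have M: "M > 0" using Bnn M_def by simp
  obtain U1 where U1: "open U1" "s \<in> U1" "\<forall>t\<in>U1. \<forall>x. cmod (f (gm t x) - f (gm s x)) \<le> e/M"
    using LUC_D[OF f, of "e/M" s] e M by auto
  obtain U2 where U2: "open U2" "s \<in> U2" "\<forall>t\<in>U2. \<forall>x. cmod (g (gm t x) - g (gm s x)) \<le> e/M"
    using LUC_D[OF g, of "e/M" s] e M by auto
  have "cmod (f (gm t x) * g (gm t x) - f (gm s x) * g (gm s x)) \<le> e" if t: "t \<in> U1 \<inter> U2" for t x
  proof -
    let ?a = "f (gm t x)" and ?b = "g (gm t x)" and ?c = "f (gm s x)" and ?d = "g (gm s x)"
    have "?a * ?b - ?c * ?d = ?a * (?b - ?d) + ?d * (?a - ?c)" by (simp add: algebra_simps)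
    then have "cmod (?a * ?b - ?c * ?d) \<le> cmod ?a * cmod (?b - ?d) + cmod ?d * cmod (?a - ?c)"
      by (metis norm_mult norm_triangle_ineq)
    also have "\<dots> \<le> Bf * (e/M) + Bg * (e/M)"
      using B U1(3) U2(3) t Bnn by (intro add_mono mult_mono) auto
    also have "\<dots> = (Bf + Bg) * e / M" by (simp add: add_divide_distrib distrib_right)
    also have "\<dots> \<le> e" using M e M_def by (simp add: field_simps)
    finally show ?thesis .
  qed
  then show "\<exists>U. open U \<and> s \<in> U \<and> (\<forall>t\<in>U. \<forall>x. cmod (f (gm t x) * g (gm t x) - f (gm s x) * g (gm s x)) \<le> e)"
    using U1 U2 by (intro exI[of _ "U1 \<inter> U2"]) auto
qed

lemma LUC_cnj:
  assumes f: "f \<in> LUC gm" shows "(\<lambda>x. cnj (f x)) \<in> LUC gm"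
proof (rule LUC_I)
  obtain B where B: "\<forall>x. cmod (f x) \<le> B" using CB_D LUC_CB f by metis
  then show "(\<lambda>x. cnj (f x)) \<in> CB"
    using LUC_CB f unfolding CB_def bounded_iff by (auto intro: continuous_intros)
  fix s and e :: real assume e: "e > 0"
  obtain U where U: "open U" "s \<in> U" "\<forall>t\<in>U. \<forall>x. cmod (f (gm t x) - f (gm s x)) \<le> e"
    using LUC_D[OF f e] by auto
  then show "\<exists>U. open U \<and> s \<in> U \<and> (\<forall>t\<in>U. \<forall>x. cmod (cnj (f (gm t x)) - cnj (f (gm s x))) \<le> e)"
    by (metis complex_cnj_diff complex_mod_cnj)
qed

lemma inv_diff_bound:
  fixes a b c :: complex
  assumes "d > 0" "d \<le> cmod (a - c)" "d \<le> cmod (b - c)"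
  shows "cmod (1 / (a - c) - 1 / (b - c)) \<le> cmod (a - b) / d^2"
proof -
  have ne: "a - c \<noteq> 0" "b - c \<noteq> 0" using assms by auto
  have "1 / (a - c) - 1 / (b - c) = (b - a) / ((a - c) * (b - c))" using ne by (simp add: field_simps)
  then have "cmod (1 / (a - c) - 1 / (b - c)) = cmod (a - b) / (cmod (a - c) * cmod (b - c))"
    by (simp add: norm_divide norm_mult norm_minus_commute)
  also have "\<dots> \<le> cmod (a - b) / (d * d)"
    using assms by (intro divide_left_mono mult_mono mult_pos_pos) auto
  finally show ?thesis by (simp add: power2_eq_square)
qed

lemma LUC_inv:
  assumes h: "h \<in> LUC gm" "\<forall>x. cmod (h x) \<le> B" and Bc: "B < cmod c"
  shows "(\<lambda>x. 1 / (h x - c)) \<in> LUC gm"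
proof (rule LUC_I)
  show "(\<lambda>x. 1 / (h x - c)) \<in> CB" using CB_inv LUC_CB h Bc by blast
  fix s and e :: real assume e: "e > 0"
  define d where "d = cmod c - B"
  have d: "d > 0" using Bc d_def by simp
  have dx: "d \<le> cmod (h x - c)" for x using inv_bound(2) h(2) Bc d_def by blast
  obtain U where U: "open U" "s \<in> U" "\<forall>t\<in>U. \<forall>x. cmod (h (gm t x) - h (gm s x)) \<le> e * d^2"
    using LUC_D[OF h(1), of "e * d^2" s] e d by auto
  have "cmod (1 / (h (gm t x) - c) - 1 / (h (gm s x) - c)) \<le> e" if "t \<in> U" for t x
  proof -
    have "cmod (1 / (h (gm t x) - c) - 1 / (h (gm s x) - c)) \<le> cmod (h (gm t x) - h (gm s x)) / d^2"
      using inv_diff_bound d dx by blast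
    also have "\<dots> \<le> e * d^2 / d^2" using U(3) that d by (intro divide_right_mono) auto
    also have "\<dots> = e" using d by simp
    finally show ?thesis .
  qed
  then show "\<exists>U. open U \<and> s \<in> U \<and> (\<forall>t\<in>U. \<forall>x. cmod (1 / (h (gm t x) - c) - 1 / (h (gm s x) - c)) \<le> e)"
    using U by blast
qed

lemma char_bound_LUC:
  "\<phi> \<in> characters (LUC gm) \<Longrightarrow> h \<in> LUC gm \<Longrightarrow> \<forall>x. cmod (h x) \<le> B \<Longrightarrow> cmod (\<phi> h) \<le> B"
  by (rule char_bound[where A="LUC gm"]) (auto intro: LUC_const LUC_add LUC_inv)

lemma LUC_diff: "f \<in> LUC gm \<Longrightarrow> g \<in> LUC gm \<Longrightarrow> (\<lambda>x. f x - g x) \<in> LUC gm"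
  using LUC_add[OF _ LUC_scal[of g gm "-1"], of f] by simp

lemma char_diff:
  assumes "\<phi> \<in> characters A" "f \<in> A" "g \<in> A" "\<And>g. g \<in> A \<Longrightarrow> (\<lambda>x. (-1) * g x) \<in> A"
  shows "\<phi> (\<lambda>x. f x - g x) = \<phi> f - \<phi> g"
proof -
  have "\<phi> (\<lambda>x. f x + (-1) * g x) = \<phi> f + \<phi> (\<lambda>x. (-1) * g x)"
    using char_add[OF assms(1) assms(2) assms(4)[OF assms(3)]] by simp
  also have "\<phi> (\<lambda>x. (-1) * g x) = - \<phi> g" using char_scal[OF assms(1) assms(3), of "-1"] by simp
  finally show ?thesis by simp
qed

lemma Ltr_LUC:
  assumes tg: "topological_group gm ge gi" and f: "f \<in> LUC gm"
  shows "Ltr gm a f \<in> LUC gm"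
proof -
  interpret G: group gm ge gi using tg tg_group by auto
  have fc: "continuous_on UNIV f" "bounded (range f)" using LUC_CB[OF f] by (auto simp: CB_def)
  have "continuous_on UNIV (\<lambda>x. f (gm a x))"
    using continuous_on_compose2[OF fc(1) tg_cont_left[OF tg]] by simp
  moreover have "bounded (range (\<lambda>x. f (gm a x)))" using fc(2) by (rule bounded_subset) auto
  ultimately have cb: "(\<lambda>x. f (gm a x)) \<in> CB" by (simp add: CB_def)
  show ?thesis unfolding Ltr_def
  proof (rule LUC_I[OF cb])
    fix s and e :: real assume e: "e > 0"
    obtain U where U: "open U" "gm a s \<in> U" "\<forall>t\<in>U. \<forall>x. cmod (f (gm t x) - f (gm (gm a s) x)) \<le> e"
      using LUC_D[OF f e] by blast
    have "open (gm a -` U)" using open_vimage_UNIV[OF tg_cont_left[OF tg] U(1)] .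
    moreover have "\<forall>t\<in>gm a -` U. \<forall>x. cmod (f (gm a (gm t x)) - f (gm a (gm s x))) \<le> e"
      using U(3) by (simp add: G.assoc[symmetric])
    ultimately show "\<exists>U. open U \<and> s \<in> U \<and> (\<forall>t\<in>U. \<forall>x. cmod (f (gm a (gm t x)) - f (gm a (gm s x))) \<le> e)"
      using U(2) by blast
  qed
qed

lemma Ltr_bound: "\<forall>x. cmod (f x) \<le> B \<Longrightarrow> \<forall>x. cmod (Ltr gm a f x) \<le> B"
  by (simp add: Ltr_def)

lemma Top_estimates:
  assumes tg: "topological_group gm ge gi" and f: "f \<in> LUC gm"
    and bnd: "\<And>h B. h \<in> LUC gm \<Longrightarrow> \<forall>x. cmod (h x) \<le> B \<Longrightarrow> cmod (\<nu> h) \<le> B"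
    and dif: "\<And>g h. g \<in> LUC gm \<Longrightarrow> h \<in> LUC gm \<Longrightarrow> \<nu> (\<lambda>x. g x - h x) = \<nu> g - \<nu> h"
  shows "\<And>s e. e > 0 \<Longrightarrow> \<exists>U. open U \<and> s \<in> U \<and> (\<forall>t\<in>U. \<forall>x. cmod (Top gm \<nu> f (gm t x) - Top gm \<nu> f (gm s x)) \<le> e)"
    and "(Top gm \<nu> f) \<in> CB"
proof -
  interpret G: group gm ge gi using tg tg_group by auto
  show D: "\<exists>U. open U \<and> s \<in> U \<and> (\<forall>t\<in>U. \<forall>x. cmod (Top gm \<nu> f (gm t x) - Top gm \<nu> f (gm s x)) \<le> e)"
    if e: "e > 0" for s e
  proof -
    obtain U where U: "open U" "s \<in> U" "\<forall>t\<in>U. \<forall>y. cmod (f (gm t y) - f (gm s y)) \<le> e"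
      using LUC_D[OF f e] by blast
    have "cmod (Top gm \<nu> f (gm t x) - Top gm \<nu> f (gm s x)) \<le> e" if t: "t \<in> U" for t x
    proof -
      have "Top gm \<nu> f (gm t x) - Top gm \<nu> f (gm s x) = \<nu> (\<lambda>y. Ltr gm (gm t x) f y - Ltr gm (gm s x) f y)"
        unfolding Top_def by (rule dif[symmetric]) (auto intro: Ltr_LUC[OF tg f])
      also have "cmod \<dots> \<le> e"
      proof (rule bnd)
        show "(\<lambda>y. Ltr gm (gm t x) f y - Ltr gm (gm s x) f y) \<in> LUC gm"
          by (intro LUC_diff Ltr_LUC[OF tg f])
        show "\<forall>y. cmod (Ltr gm (gm t x) f y - Ltr gm (gm s x) f y) \<le> e"
          using U(3) t by (simp add: Ltr_def G.assoc)
      qed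
      finally show ?thesis .
    qed
    then show ?thesis using U by blast
  qed
  obtain B where B: "\<forall>x. cmod (f x) \<le> B" using CB_D LUC_CB f by metis
  have "\<forall>s. cmod (Top gm \<nu> f s) \<le> B"
    unfolding Top_def using bnd Ltr_LUC[OF tg f] Ltr_bound[OF B] by blast
  then have "bounded (range (Top gm \<nu> f))" unfolding bounded_iff by auto
  moreover have "continuous_on UNIV (Top gm \<nu> f)"
  proof (rule cont_from_eps)
    fix s and e :: real assume "e > 0"
    from D[OF this, of s] obtain U where "open U" "s \<in> U"
      "\<forall>t\<in>U. cmod (Top gm \<nu> f (gm t ge) - Top gm \<nu> f (gm s ge)) \<le> e" by blast
    then show "\<exists>U. open U \<and> s \<in> U \<and> (\<forall>t\<in>U. cmod (Top gm \<nu> f t - Top gm \<nu> f s) \<le> e)" by auto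
  qed
  ultimately show "Top gm \<nu> f \<in> CB" by (simp add: CB_def)
qed

lemma Top_LUC:
  assumes tg: "topological_group gm ge gi" and f: "f \<in> LUC gm" and nu: "\<nu> \<in> characters (LUC gm)"
  shows "Top gm \<nu> f \<in> LUC gm"
proof -
  have bnd: "\<And>h B. h \<in> LUC gm \<Longrightarrow> \<forall>x. cmod (h x) \<le> B \<Longrightarrow> cmod (\<nu> h) \<le> B"
    using char_bound_LUC[OF nu] by blast
  have dif: "\<And>g h. g \<in> LUC gm \<Longrightarrow> h \<in> LUC gm \<Longrightarrow> \<nu> (\<lambda>x. g x - h x) = \<nu> g - \<nu> h"
    by (rule char_diff[OF nu _ _ LUC_scal])
  note TE = Top_estimates[where \<nu>=\<nu>, OF tg f bnd dif]
  show ?thesis by (rule LUC_I[OF TE(2) TE(1)])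
qed

lemma LUC_Lmc:
  assumes tg: "topological_group gm ge gi" and f: "f \<in> LUC gm"
  shows "f \<in> Lmc gm"
  unfolding Lmc_def
proof (intro CollectI conjI ballI)
  show "f \<in> CB" using LUC_CB f .
  fix \<mu> :: "('a \<Rightarrow> complex) \<Rightarrow> complex" assume mu: "\<mu> \<in> betaG"
  then have mu': "\<mu> \<in> characters CB" by (simp add: betaG_def)
  have bnd: "\<And>h B. h \<in> LUC gm \<Longrightarrow> \<forall>x. cmod (h x) \<le> B \<Longrightarrow> cmod (\<mu> h) \<le> B"
    using char_bound_CB[OF mu'] LUC_CB by blast
  have dif: "\<And>g h. g \<in> LUC gm \<Longrightarrow> h \<in> LUC gm \<Longrightarrow> \<mu> (\<lambda>x. g x - h x) = \<mu> g - \<mu> h"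
    by (rule char_diff[OF mu' LUC_CB LUC_CB CB_scal])
  show "Top gm \<mu> f \<in> CB" by (rule Top_estimates(2)[where \<nu>=\<mu>, OF tg f bnd dif])
qed

lemma Ltr_add: "Ltr gm s (\<lambda>x. f x + g x) = (\<lambda>x. Ltr gm s f x + Ltr gm s g x)" by (simp add: Ltr_def)
lemma Ltr_scal: "Ltr gm s (\<lambda>x. c * f x) = (\<lambda>x. c * Ltr gm s f x)" by (simp add: Ltr_def)
lemma Ltr_mult: "Ltr gm s (\<lambda>x. f x * g x) = (\<lambda>x. Ltr gm s f x * Ltr gm s g x)" by (simp add: Ltr_def)

lemma luc_mult_GLUC:
  assumes tg: "topological_group gm ge gi" and mu: "\<mu> \<in> GLUC gm" and nu: "\<nu> \<in> GLUC gm"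
  shows "luc_mult gm \<mu> \<nu> \<in> GLUC gm"
proof -
  have mu': "\<mu> \<in> characters (LUC gm)" and nu': "\<nu> \<in> characters (LUC gm)" using mu nu by (auto simp: GLUC_def)
  have T: "\<And>f. f \<in> LUC gm \<Longrightarrow> Top gm \<nu> f \<in> LUC gm" using Top_LUC[OF tg _ nu'] .
  have L: "\<And>f s. f \<in> LUC gm \<Longrightarrow> Ltr gm s f \<in> LUC gm" using Ltr_LUC[OF tg] .
  have Tadd: "Top gm \<nu> (\<lambda>x. f x + g x) = (\<lambda>s. Top gm \<nu> f s + Top gm \<nu> g s)"
    if "f \<in> LUC gm" "g \<in> LUC gm" for f g
    unfolding Top_def Ltr_add using char_add[OF nu' L L] that by auto
  have Tscal: "Top gm \<nu> (\<lambda>x. c * f x) = (\<lambda>s. c * Top gm \<nu> f s)"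
    if "f \<in> LUC gm" for f c
    unfolding Top_def Ltr_scal using char_scal[OF nu' L] that by auto
  have Tmult: "Top gm \<nu> (\<lambda>x. f x * g x) = (\<lambda>s. Top gm \<nu> f s * Top gm \<nu> g s)"
    if "f \<in> LUC gm" "g \<in> LUC gm" for f g
    unfolding Top_def Ltr_mult using char_mult[OF nu' L L] that by auto
  have T1: "Top gm \<nu> (\<lambda>x. 1) = (\<lambda>s. 1)"
    unfolding Top_def Ltr_def using char_one[OF nu' LUC_const] by simp
  show ?thesis
    unfolding GLUC_def characters_def
  proof (intro CollectI conjI ballI allI impI)
    show "\<exists>f\<in>LUC gm. luc_mult gm \<mu> \<nu> f \<noteq> 0"
      using T1 char_one[OF mu' LUC_const] LUC_const unfolding luc_mult_def by (intro bexI[of _ "\<lambda>x. 1"]) auto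
    show "luc_mult gm \<mu> \<nu> f = 0" if "f \<notin> LUC gm" for f using that by (simp add: luc_mult_def)
    fix f g c assume f: "f \<in> LUC gm" and g: "g \<in> LUC gm"
    show "luc_mult gm \<mu> \<nu> (\<lambda>x. f x + g x) = luc_mult gm \<mu> \<nu> f + luc_mult gm \<mu> \<nu> g"
    proof -
      have "\<mu> (Top gm \<nu> (\<lambda>x. f x + g x)) = \<mu> (Top gm \<nu> f) + \<mu> (Top gm \<nu> g)"
        unfolding Tadd[OF f g] by (rule char_add[OF mu' T[OF f] T[OF g]])
      then show ?thesis using f g LUC_add[OF f g] unfolding luc_mult_def by simp
    qed
    show "luc_mult gm \<mu> \<nu> (\<lambda>x. f x * g x) = luc_mult gm \<mu> \<nu> f * luc_mult gm \<mu> \<nu> g"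
    proof -
      have "\<mu> (Top gm \<nu> (\<lambda>x. f x * g x)) = \<mu> (Top gm \<nu> f) * \<mu> (Top gm \<nu> g)"
        unfolding Tmult[OF f g] by (rule char_mult[OF mu' T[OF f] T[OF g]])
      then show ?thesis using f g LUC_mult[OF f g] unfolding luc_mult_def by simp
    qed
  next
    fix f c assume f: "f \<in> LUC gm"
    show "luc_mult gm \<mu> \<nu> (\<lambda>x. c * f x) = c * luc_mult gm \<mu> \<nu> f"
    proof -
      have "\<mu> (Top gm \<nu> (\<lambda>x. c * f x)) = c * \<mu> (Top gm \<nu> f)"
        unfolding Tscal[OF f] by (rule char_scal[OF mu' T[OF f]])
      then show ?thesis using f LUC_scal[OF f] unfolding luc_mult_def by simp
    qed
  qed
qed

lemma t2_Hausdorff: "Hausdorff_space (euclidean :: 'a::t2_space topology)"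
  unfolding Hausdorff_space_def by (simp add: separation_t2 disjnt_def)

lemma urysohn_cc:
  fixes u :: "'a::t2_space"
  assumes "locally_compact_space (euclidean :: 'a topology)"
  obtains g :: "'a \<Rightarrow> real" and K where "continuous_on UNIV g" "compact K"
     "\<forall>x. x\<notin>K \<longrightarrow> g x = 0" "g u = 1" "\<forall>x. 0 \<le> g x \<and> g x \<le> 1"
proof -
  have cr: "completely_regular_space (euclidean :: 'a topology)"
    using assms t2_Hausdorff locally_compact_regular_imp_completely_regular_space by blast
  obtain U K where UK: "open U" "compact K" "u \<in> U" "U \<subseteq> K"
    using assms unfolding locally_compact_space_def by (auto; meson)
  obtain f where f: "continuous_map euclidean (top_of_set {0..1::real}) f" "f ` (-U) \<subseteq> {0}" "f ` {u} \<subseteq> {1}"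
    using Urysohn_completely_regular_compact_closed[of 0 1 euclidean "{u}" "-U"] cr UK
    by (auto simp: closed_Compl disjnt_def)
  have "continuous_on UNIV f" using f(1) by (simp add: continuous_map_in_subtopology)
  moreover have "\<forall>x. 0 \<le> f x \<and> f x \<le> 1" using f(1) by (auto simp: continuous_map_in_subtopology)
  moreover have "\<forall>x. x\<notin>K \<longrightarrow> f x = 0" using f(2) UK by auto
  ultimately show ?thesis using that[of f K] UK f(3) by auto
qed

lemma twlc:
  fixes gm :: "'a::t2_space \<Rightarrow> 'a \<Rightarrow> 'a"
  assumes tg: "topological_group gm ge gi" and lc: "locally_compact_space (euclidean :: 'a topology)"
  shows "top_weak_left_cancellative gm"
  unfolding top_weak_left_cancellative_def
proof
  fix u :: 'a
  interpret G: group gm ge gi using tg tg_group by auto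
  obtain g :: "'a \<Rightarrow> real" and K where g: "continuous_on UNIV g" "compact K"
     "\<forall>x. x\<notin>K \<longrightarrow> g x = 0" "g u = 1" "\<forall>x. 0 \<le> g x \<and> g x \<le> 1"
    using urysohn_cc[OF lc] by blast
  define f where "f = (\<lambda>x. complex_of_real (1 - g x))"
  define k where "k = (\<lambda>x. complex_of_real (max 0 (1/2 - g x)))"
  define A where "A = {x. 1/2 \<le> g x}"
  have fL: "f \<in> LUC gm" unfolding f_def
    by (rule const_outside_LUC[OF tg lc _ g(2), of _ 1]) (use g in \<open>auto intro!: continuous_intros\<close>)
  have kL: "k \<in> LUC gm" unfolding k_def
    by (rule const_outside_LUC[OF tg lc _ g(2), of _ "1/2"]) (use g in \<open>auto intro!: continuous_intros\<close>)
  have AK: "A \<subseteq> K" using g(3) unfolding A_def by force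
  have "closed A" unfolding A_def by (intro closed_Collect_le continuous_intros g(1))
  then have cA: "compact A" using compact_Int_closed[OF g(2)] AK by (metis inf.absorb_iff2)
  have "A = k -` {0}" unfolding A_def k_def by (auto simp: max_def split: if_splits)
  then have zA: "A \<in> Zsets gm" unfolding Zsets_def using LUC_Lmc[OF tg kL] by blast
  have ff: "cmod (f x) = 1 - g x" for x
  proof -
    have "cmod (f x) = \<bar>1 - g x\<bar>" unfolding f_def by (rule norm_of_real)
    then show ?thesis using g(5) by simp
  qed
  have "A = Eset (1/2) f" unfolding A_def Eset_def using ff by auto
  moreover have "f u = 0" using g(4) f_def by simp
  ultimately have eA: "A \<in> esets gm u" unfolding esets_def using LUC_Lmc[OF tg fL] by force
  have "compact {t. gm v t \<in> A}" for v
  proof -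
    have "{t. gm v t \<in> A} = gm (gi v) ` A"
    proof
      show "{t. gm v t \<in> A} \<subseteq> gm (gi v) ` A"
      proof
        fix t assume "t \<in> {t. gm v t \<in> A}"
        moreover have "t = gm (gi v) (gm v t)" by (simp add: G.assoc[symmetric] G.group_left_neutral)
        ultimately show "t \<in> gm (gi v) ` A" by blast
      qed
      show "gm (gi v) ` A \<subseteq> {t. gm v t \<in> A}"
        by (auto simp: G.assoc[symmetric])
    qed
    then show ?thesis
      using compact_continuous_image[OF continuous_on_subset[OF tg_cont_left[OF tg] subset_UNIV] cA] by simp
  qed
  then show "\<exists>A. compact A \<and> A \<in> Zsets gm \<and> A \<in> esets gm u \<and> (\<forall>v. compact {t. gm v t \<in> A})"
    using cA zA eA by blast
qed

lemma pow_small_zero: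
  fixes a B r :: real
  assumes "\<forall>n. a \<le> B * r^n" "0 \<le> r" "r < 1" "0 \<le> B"
  shows "a \<le> 0"
proof (rule ccontr)
  assume "\<not> a \<le> 0"
  hence a: "a > 0" by simp
  have "a/(B+1) > 0" using a assms(4) by simp
  then obtain n where n: "r^n < a/(B+1)" using real_arch_pow_inv assms(3) by blast
  then have "(B+1) * r^n < a" using assms(4) by (simp add: field_simps)
  moreover have "B * r^n \<le> (B+1) * r^n" using assms(2) by (simp add: distrib_right)
  ultimately show False using assms(1) by (metis not_le order_le_less_trans)
qed

lemma nonev_witness:
  assumes nu: "\<nu> \<in> GLUC gm" "\<nu> \<notin> range (evalmap gm)"
  shows "\<exists>g. g \<in> LUC gm \<and> \<nu> g = 0 \<and> g y = 1"
proof -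
  have nu': "\<nu> \<in> characters (LUC gm)" using nu by (simp add: GLUC_def)
  have "\<nu> \<noteq> evalmap gm y" using nu by auto
  then obtain f where f: "\<nu> f \<noteq> evalmap gm y f" by auto
  have fL: "f \<in> LUC gm"
  proof (rule ccontr)
    assume "f \<notin> LUC gm" then show False using f char_out[OF nu'] by (simp add: evalmap_def)
  qed
  hence fy: "\<nu> f \<noteq> f y" using f by (simp add: evalmap_def)
  define a where "a = 1 / (f y - \<nu> f)"
  define g where "g = (\<lambda>x. a * (f x + (- \<nu> f)))"
  have L1: "(\<lambda>x. f x + (- \<nu> f)) \<in> LUC gm" by (rule LUC_add[OF fL LUC_const])
  have gL: "g \<in> LUC gm" unfolding g_def by (rule LUC_scal[OF L1])
  have "\<nu> (\<lambda>x. f x + (- \<nu> f)) = \<nu> f + \<nu> (\<lambda>x. - \<nu> f)" by (rule char_add[OF nu' fL LUC_const])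
  also have "\<nu> (\<lambda>x. - \<nu> f) = - \<nu> f" by (rule char_const[OF nu' LUC_const])
  finally have "\<nu> (\<lambda>x. f x + (- \<nu> f)) = 0" by simp
  hence "\<nu> g = 0" unfolding g_def using char_scal[OF nu' L1] by simp
  moreover have "g y = 1" unfolding g_def a_def using fy by (simp add: field_simps)
  ultimately show ?thesis using gL by blast
qed

lemma sum_LUC_char:
  assumes nu': "\<nu> \<in> characters (LUC gm)" and "finite Y" and G: "\<forall>y\<in>Y. G y \<in> LUC gm \<and> \<nu> (G y) = 0"
  shows "\<exists>w. w \<in> LUC gm \<and> \<nu> w = 0 \<and> (\<forall>x. w x = complex_of_real (\<Sum>y\<in>Y. (cmod (G y x))^2))"
  using assms(2,3)
proof (induction Y rule: finite_induct)
  case empty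
  show ?case by (intro exI[of _ "\<lambda>x. 0"]) (simp add: LUC_const char_const[OF nu' LUC_const])
next
  case (insert y Y)
  then obtain w where w: "w \<in> LUC gm" "\<nu> w = 0" "\<forall>x. w x = complex_of_real (\<Sum>y\<in>Y. (cmod (G y x))^2)"
    by auto
  have Gy: "G y \<in> LUC gm" "\<nu> (G y) = 0" using insert by auto
  define k where "k = (\<lambda>x. G y x * cnj (G y x))"
  have kL: "k \<in> LUC gm" unfolding k_def by (rule LUC_mult[OF Gy(1) LUC_cnj[OF Gy(1)]])
  have k0: "\<nu> k = 0" unfolding k_def using char_mult[OF nu' Gy(1) LUC_cnj[OF Gy(1)]] Gy(2) by simp
  have kx: "k x = complex_of_real ((cmod (G y x))^2)" for x unfolding k_def by (rule complex_norm_square[symmetric])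
  have "(\<lambda>x. w x + k x) \<in> LUC gm" by (rule LUC_add[OF w(1) kL])
  moreover have "\<nu> (\<lambda>x. w x + k x) = 0" using char_add[OF nu' w(1) kL] w(2) k0 by simp
  moreover have "\<forall>x. w x + k x = complex_of_real (\<Sum>y\<in>insert y Y. (cmod (G y x))^2)"
    using w(3) kx insert.hyps by simp
  ultimately show ?case by blast
qed

lemma kill_cc:
  fixes gm :: "'a::t2_space \<Rightarrow> 'a \<Rightarrow> 'a"
  assumes nu: "\<nu> \<in> GLUC gm" "\<nu> \<notin> range (evalmap gm)"
    and hL: "h \<in> LUC gm" and K: "compact K" and h0: "\<forall>x. x\<notin>K \<longrightarrow> h x = 0"
  shows "\<nu> h = 0"
proof -
  have nu': "\<nu> \<in> characters (LUC gm)" using nu by (simp add: GLUC_def)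
  obtain G where G: "\<forall>y. G y \<in> LUC gm \<and> \<nu> (G y) = 0 \<and> G y y = 1"
    using nonev_witness[OF nu] by metis
  define Op where "Op y = {x. 1/2 < cmod (G y x)}" for y
  have oOp: "open (Op y)" for y
  proof -
    have "continuous_on UNIV (G y)" using G LUC_CB by (auto simp: CB_def)
    then show ?thesis unfolding Op_def by (intro open_Collect_less continuous_intros)
  qed
  have "K \<subseteq> (\<Union>y\<in>K. Op y)" using G by (auto simp: Op_def)
  then obtain Y where Y: "Y \<subseteq> K" "finite Y" "K \<subseteq> (\<Union>y\<in>Y. Op y)"
    using compactE_image[OF K, of K Op] oOp by metis
  obtain w where w: "w \<in> LUC gm" "\<nu> w = 0" "\<forall>x. w x = complex_of_real (\<Sum>y\<in>Y. (cmod (G y x))^2)"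
    using sum_LUC_char[OF nu' Y(2), of G] G by blast
  have "\<forall>y. \<exists>B. \<forall>x. cmod (G y x) \<le> B" using G LUC_CB CB_D by blast
  then obtain B where B: "\<forall>y. \<forall>x. cmod (G y x) \<le> B y" by metis
  define W where "W x = (\<Sum>y\<in>Y. (cmod (G y x))^2)" for x
  define M where "M = (\<Sum>y\<in>Y. (B y)^2) + 1"
  have W0: "0 \<le> W x" for x unfolding W_def by (intro sum_nonneg) auto
  have WM: "W x \<le> M - 1" for x unfolding W_def M_def using B by (auto intro!: sum_mono power_mono)
  have M1: "M \<ge> 1" using WM[of undefined] W0[of undefined] by linarith
  have WK: "1/4 \<le> W x" if xK: "x \<in> K" for x
  proof -
    obtain y where y: "y \<in> Y" "x \<in> Op y" using Y(3) xK by blast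
    have "1/2 < cmod (G y x)" using y(2) by (simp add: Op_def)
    then have "(1/2)^2 \<le> (cmod (G y x))^2" by (intro power_mono) auto
    also have "\<dots> \<le> W x" unfolding W_def using y(1) Y(2) by (intro member_le_sum) auto
    finally show ?thesis by (simp add: power2_eq_square)
  qed
  define q where "q = (\<lambda>x. 1 + (- 1 / complex_of_real M) * w x)"
  have qL: "q \<in> LUC gm" unfolding q_def by (rule LUC_add[OF LUC_const LUC_scal[OF w(1)]])
  have "\<nu> q = \<nu> (\<lambda>x. 1) + \<nu> (\<lambda>x. (- 1 / complex_of_real M) * w x)"
    unfolding q_def by (rule char_add[OF nu' LUC_const LUC_scal[OF w(1)]])
  moreover have "\<nu> (\<lambda>x. (- 1 / complex_of_real M) * w x) = 0"
    using char_scal[OF nu' w(1), of "- 1 / complex_of_real M"] w(2) by (simp only: mult_zero_right)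
  ultimately have q1: "\<nu> q = 1" using char_one[OF nu' LUC_const] by simp
  define r where "r = 1 - 1 / (4 * M)"
  have qx: "cmod (q x) = 1 - W x / M" for x
  proof -
    have "q x = complex_of_real (1 - W x / M)" unfolding q_def using w(3) W_def by simp
    then have "cmod (q x) = \<bar>1 - W x / M\<bar>" by (metis norm_of_real)
    moreover have "W x / M \<le> 1" using WM[of x] M1 by (simp add: divide_le_eq)
    ultimately show ?thesis by simp
  qed
  have qb: "cmod (q x) \<le> 1" for x using qx W0[of x] M1 by simp
  have qK: "cmod (q x) \<le> r" if "x \<in> K" for x
  proof -
    have "1 / (4 * M) \<le> W x / M" using divide_right_mono[OF WK[OF that], of M] M1 by simp
    then show ?thesis using qx r_def by simp
  qed
  have r0: "0 \<le> r" "r < 1" using M1 unfolding r_def by (simp_all add: divide_le_eq)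
  define p where "p n = (\<lambda>x. h x * q x ^ n)" for n
  have pn: "p n \<in> LUC gm \<and> \<nu> (p n) = \<nu> h" for n
  proof (induction n)
    case 0 then show ?case using hL by (simp add: p_def)
  next
    case (Suc n)
    have e: "p (Suc n) = (\<lambda>x. p n x * q x)" by (simp add: p_def fun_eq_iff algebra_simps)
    show ?case unfolding e using LUC_mult[of "p n" gm q] char_mult[OF nu', of "p n" q] Suc qL q1 by simp
  qed
  obtain Bh where Bh: "\<forall>x. cmod (h x) \<le> Bh" using CB_D LUC_CB hL by metis
  have Bh0: "0 \<le> Bh" using Bh norm_ge_zero order_trans by blast
  have "cmod (\<nu> h) \<le> Bh * r^n" for n
  proof -
    have "\<forall>x. cmod (p n x) \<le> Bh * r^n"
    proof
      fix x show "cmod (p n x) \<le> Bh * r^n"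
      proof (cases "x \<in> K")
        case True
        have "cmod (p n x) = cmod (h x) * cmod (q x) ^ n" by (simp add: p_def norm_mult norm_power)
        also have "\<dots> \<le> Bh * r^n" using Bh Bh0 qK[OF True] by (intro mult_mono power_mono) auto
        finally show ?thesis .
      next
        case False then show ?thesis using h0 Bh0 r0 by (simp add: p_def)
      qed
    qed
    then show ?thesis using char_bound_LUC[OF nu'] pn[of n] by metis
  qed
  then have "cmod (\<nu> h) \<le> 0" using pow_small_zero r0 Bh0 by blast
  then show ?thesis by simp
qed

lemma prod_not_eval:
  fixes gm :: "'a::t2_space \<Rightarrow> 'a \<Rightarrow> 'a"
  assumes tg: "topological_group gm ge gi" and lc: "locally_compact_space (euclidean :: 'a topology)"
    and mu: "\<mu> \<in> GLUC gm" and nu: "\<nu> \<in> GLUC gm" "\<nu> \<notin> range (evalmap gm)"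
  shows "luc_mult gm \<mu> \<nu> \<notin> range (evalmap gm)"
proof
  interpret G: group gm ge gi using tg tg_group by auto
  have mu': "\<mu> \<in> characters (LUC gm)" using mu by (simp add: GLUC_def)
  assume "luc_mult gm \<mu> \<nu> \<in> range (evalmap gm)"
  then obtain x where x: "luc_mult gm \<mu> \<nu> = evalmap gm x" by auto
  obtain g :: "'a \<Rightarrow> real" and K where g: "continuous_on UNIV g" "compact K"
     "\<forall>x. x\<notin>K \<longrightarrow> g x = 0" "g x = 1" "\<forall>x. 0 \<le> g x \<and> g x \<le> 1"
    using urysohn_cc[OF lc] by blast
  define f where "f = (\<lambda>z. complex_of_real (g z))"
  have fL: "f \<in> LUC gm" unfolding f_def
    by (rule const_outside_LUC[OF tg lc _ g(2), of _ 0]) (use g in \<open>auto intro!: continuous_intros\<close>)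
  have T0: "Top gm \<nu> f = (\<lambda>s. 0)"
  proof
    fix s
    have "Ltr gm s f \<in> LUC gm" by (rule Ltr_LUC[OF tg fL])
    moreover have "compact (gm (gi s) ` K)"
      using compact_continuous_image[OF continuous_on_subset[OF tg_cont_left[OF tg] subset_UNIV] g(2)] .
    moreover have "\<forall>z. z \<notin> gm (gi s) ` K \<longrightarrow> Ltr gm s f z = 0"
    proof (intro allI impI)
      fix z assume z: "z \<notin> gm (gi s) ` K"
      have "gm s z \<notin> K"
      proof
        assume "gm s z \<in> K"
        moreover have "z = gm (gi s) (gm s z)" by (simp add: G.assoc[symmetric] G.group_left_neutral)
        ultimately show False using z by blast
      qed
      then show "Ltr gm s f z = 0" using g(3) by (simp add: Ltr_def f_def)
    qed
    ultimately show "Top gm \<nu> f s = 0" unfolding Top_def using kill_cc[OF nu] by blast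
  qed
  have "luc_mult gm \<mu> \<nu> f = 0" using fL char_const[OF mu' LUC_const, of 0] T0 by (simp add: luc_mult_def)
  moreover have "evalmap gm x f = 1" using fL g(4) by (simp add: evalmap_def f_def)
  ultimately show False using x by simp
qed

lemma cluster_closed:
  assumes "closed C" "eventually (\<lambda>\<psi>. \<psi> \<in> C) F" "inf (nhds \<phi>) F \<noteq> bot"
  shows "\<phi> \<in> C"
proof (rule ccontr)
  assume "\<phi> \<notin> C"
  then have "eventually (\<lambda>\<psi>. \<psi> \<in> - C) (nhds \<phi>)" using assms(1)
    by (intro eventually_nhds_in_open) auto
  then have "eventually (\<lambda>\<psi>. False) (inf (nhds \<phi>) F)" unfolding eventually_inf using assms(2) by blast
  then show False using assms(3) by (simp add: eventually_False)
qed

lemma exists_nonev: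
  fixes gm :: "'a::t2_space \<Rightarrow> 'a \<Rightarrow> 'a"
  assumes tg: "topological_group gm ge gi" and lc: "locally_compact_space (euclidean :: 'a topology)"
    and nc: "\<not> compact (UNIV :: 'a set)"
  shows "\<exists>\<phi>. \<phi> \<in> GLUC gm \<and> \<phi> \<notin> range (evalmap gm)"
proof -
  define Fc :: "'a filter" where "Fc = Abs_filter (\<lambda>P. \<exists>K. compact K \<and> (\<forall>x. x \<notin> K \<longrightarrow> P x))"
  have isf: "is_filter (\<lambda>P. \<exists>K. compact K \<and> (\<forall>x::'a. x \<notin> K \<longrightarrow> P x))"
  proof (rule is_filter.intro)
    show "\<exists>K. compact K \<and> (\<forall>x::'a. x \<notin> K \<longrightarrow> True)" by (intro exI[of _ "{}"]) auto
  next
    fix P Q :: "'a \<Rightarrow> bool"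
    assume "\<exists>K. compact K \<and> (\<forall>x. x \<notin> K \<longrightarrow> P x)" "\<exists>K. compact K \<and> (\<forall>x. x \<notin> K \<longrightarrow> Q x)"
    then obtain K1 K2 where "compact K1" "\<forall>x. x \<notin> K1 \<longrightarrow> P x" "compact K2" "\<forall>x. x \<notin> K2 \<longrightarrow> Q x" by blast
    then show "\<exists>K. compact K \<and> (\<forall>x. x \<notin> K \<longrightarrow> P x \<and> Q x)"
      by (intro exI[of _ "K1 \<union> K2"]) auto
  next
    fix P Q :: "'a \<Rightarrow> bool"
    assume "\<forall>x. P x \<longrightarrow> Q x" "\<exists>K. compact K \<and> (\<forall>x. x \<notin> K \<longrightarrow> P x)"
    then show "\<exists>K. compact K \<and> (\<forall>x. x \<notin> K \<longrightarrow> Q x)" by blast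
  qed
  have evF: "eventually P Fc \<longleftrightarrow> (\<exists>K. compact K \<and> (\<forall>x. x \<notin> K \<longrightarrow> P x))" for P
    unfolding Fc_def by (rule eventually_Abs_filter[OF isf])
  have Fnb: "Fc \<noteq> bot"
  proof
    assume "Fc = bot"
    then have "eventually (\<lambda>x. False) Fc" by simp
    then obtain K :: "'a set" where "compact K" "\<forall>x. x \<notin> K \<longrightarrow> False" using evF[of "\<lambda>x. False"] by meson
    then have "K = UNIV" by auto
    then show False using nc \<open>compact K\<close> by simp
  qed
  define F where "F = filtermap (evalmap gm) Fc"
  have Fnb': "F \<noteq> bot" using Fnb by (simp add: F_def filtermap_bot_iff)
  have "\<forall>f. \<exists>B. \<forall>x. cmod (evalmap gm x f) \<le> B"
  proof
    fix f :: "'a \<Rightarrow> complex"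
    show "\<exists>B. \<forall>x. cmod (evalmap gm x f) \<le> B"
    proof (cases "f \<in> LUC gm")
      case True
      then obtain B where "\<forall>x. cmod (f x) \<le> B" using CB_D LUC_CB by metis
      then show ?thesis using True by (auto simp: evalmap_def)
    next
      case False then show ?thesis by (auto simp: evalmap_def)
    qed
  qed
  then obtain Bd where Bd: "\<forall>f x. cmod (evalmap gm x f) \<le> Bd f" by metis
  define S where "S = PiE UNIV (\<lambda>f. cball (0::complex) (Bd f))"
  have "compactin (product_topology (\<lambda>_. euclidean) UNIV) S" unfolding S_def
    by (simp add: compactin_PiE)
  then have cS: "compact S" by (simp add: euclidean_product_topology)
  have evS: "eventually (\<lambda>\<psi>. \<psi> \<in> S) F" unfolding F_def eventually_filtermap S_def
    using Bd by (intro always_eventually) (auto simp: PiE_iff)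
  obtain \<phi> where phi: "\<phi> \<in> S" "inf (nhds \<phi>) F \<noteq> bot"
    using cS Fnb' evS unfolding compact_filter by blast
  have ev_all: "eventually (\<lambda>\<psi>. \<psi> \<in> C) F" if "\<forall>x. evalmap gm x \<in> C" for C
    unfolding F_def eventually_filtermap using that by (intro always_eventually) auto
  have coord: "continuous_on UNIV (\<lambda>\<psi>::('a \<Rightarrow> complex) \<Rightarrow> complex. \<psi> f)" for f
    by (rule continuous_on_product_coordinates)
  have out: "\<phi> f = 0" if "f \<notin> LUC gm" for f
  proof -
    have "\<phi> \<in> {\<psi>. \<psi> f = 0}"
      by (rule cluster_closed[OF closed_Collect_eq[OF coord continuous_on_const] ev_all phi(2)])
         (use that in \<open>simp add: evalmap_def\<close>)
    then show ?thesis by simp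
  qed
  have add: "\<phi> (\<lambda>x. f x + g x) = \<phi> f + \<phi> g" if "f \<in> LUC gm" "g \<in> LUC gm" for f g
  proof -
    have "\<phi> \<in> {\<psi>. \<psi> (\<lambda>x. f x + g x) = \<psi> f + \<psi> g}"
      by (rule cluster_closed[OF closed_Collect_eq[OF coord continuous_on_add[OF coord coord]] ev_all phi(2)])
         (use that LUC_add[OF that] in \<open>simp add: evalmap_def\<close>)
    then show ?thesis by simp
  qed
  have scal: "\<phi> (\<lambda>x. c * f x) = c * \<phi> f" if "f \<in> LUC gm" for f c
  proof -
    have "\<phi> \<in> {\<psi>. \<psi> (\<lambda>x. c * f x) = c * \<psi> f}"
      by (rule cluster_closed[OF closed_Collect_eq[OF coord continuous_on_mult[OF continuous_on_const coord]] ev_all phi(2)])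
         (use that LUC_scal[OF that] in \<open>simp add: evalmap_def\<close>)
    then show ?thesis by simp
  qed
  have mult: "\<phi> (\<lambda>x. f x * g x) = \<phi> f * \<phi> g" if "f \<in> LUC gm" "g \<in> LUC gm" for f g
  proof -
    have "\<phi> \<in> {\<psi>. \<psi> (\<lambda>x. f x * g x) = \<psi> f * \<psi> g}"
      by (rule cluster_closed[OF closed_Collect_eq[OF coord continuous_on_mult[OF coord coord]] ev_all phi(2)])
         (use that LUC_mult[OF that] in \<open>simp add: evalmap_def\<close>)
    then show ?thesis by simp
  qed
  have one: "\<phi> (\<lambda>x. 1) = 1"
  proof -
    have "\<phi> \<in> {\<psi>. \<psi> (\<lambda>x. 1) = 1}"
      by (rule cluster_closed[OF closed_Collect_eq[OF coord continuous_on_const] ev_all phi(2)])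
         (use LUC_const in \<open>simp add: evalmap_def\<close>)
    then show ?thesis by simp
  qed
  have inG: "\<phi> \<in> GLUC gm"
    unfolding GLUC_def characters_def
  proof (intro CollectI conjI allI impI ballI)
    show "\<exists>f\<in>LUC gm. \<phi> f \<noteq> 0" using one LUC_const by (intro bexI[of _ "\<lambda>x. 1"]) auto
  qed (simp_all add: out add scal mult)
  have notev: "\<phi> \<noteq> evalmap gm y" for y
  proof
    assume eq: "\<phi> = evalmap gm y"
    obtain g :: "'a \<Rightarrow> real" and K where g: "continuous_on UNIV g" "compact K"
       "\<forall>x. x\<notin>K \<longrightarrow> g x = 0" "g y = 1" "\<forall>x. 0 \<le> g x \<and> g x \<le> 1"
      using urysohn_cc[OF lc] by blast
    define f where "f = (\<lambda>z. complex_of_real (g z))"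
    have fL: "f \<in> LUC gm" unfolding f_def
      by (rule const_outside_LUC[OF tg lc _ g(2), of _ 0]) (use g in \<open>auto intro!: continuous_intros\<close>)
    have "eventually (\<lambda>\<psi>. \<psi> \<in> {\<psi>. \<psi> f = 0}) F"
      unfolding F_def eventually_filtermap evF using g(2,3) fL by (auto simp: evalmap_def f_def)
    then have "\<phi> \<in> {\<psi>. \<psi> f = 0}"
      by (rule cluster_closed[OF closed_Collect_eq[OF coord continuous_on_const] _ phi(2)])
    moreover have "evalmap gm y f = 1" using fL g(4) by (simp add: evalmap_def f_def)
    ultimately show False using eq by simp
  qed
  show ?thesis using inG notev by blast
qed

theorem corollary4p8:
  fixes gm :: "'a::t2_space \<Rightarrow> 'a \<Rightarrow> 'a" and ge :: 'a and gi :: "'a \<Rightarrow> 'a"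
  assumes "topological_group gm ge gi"
    and "locally_compact_space (euclidean :: 'a topology)"
    and "\<not> compact (UNIV :: 'a set)"
  shows "left_ideal gm (GLUC gm - range (evalmap gm)) \<longleftrightarrow> top_weak_left_cancellative gm"
proof -
  have L: "left_ideal gm (GLUC gm - range (evalmap gm))"
    unfolding left_ideal_def
  proof (intro conjI ballI)
    show "GLUC gm - range (evalmap gm) \<noteq> {}" using exists_nonev[OF assms] by blast
    show "GLUC gm - range (evalmap gm) \<subseteq> GLUC gm" by blast
    fix \<mu> \<nu> assume mu: "\<mu> \<in> GLUC gm" and nu: "\<nu> \<in> GLUC gm - range (evalmap gm)"
    show "luc_mult gm \<mu> \<nu> \<in> GLUC gm - range (evalmap gm)"
      using luc_mult_GLUC[OF assms(1) mu] prod_not_eval[OF assms(1,2) mu] nu by blast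
  qed
  moreover have "top_weak_left_cancellative gm" by (rule twlc[OF assms(1,2)])
  ultimately show ?thesis by simp
qed

end
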